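(* Let $B\in\mathbb{Z}^{d\times j}$, $j\le d$, have linearly independent columns $B_1,\dots,B_j$. Then for every $\ell\in\{1,\dots,j\}$, $$|\Pi(B)\cap\mathbb{Z}^d|=\mathrm{frac}_B[\ell]\cdot|\Pi(B\setminus B_\ell)\cap\mathbb{Z}^d|.$$
   Context: For $B\in\mathbb{Z}^{d\times j}$ with linearly independent columns, the fundamental parallelepiped is $\Pi(B)=\{Bx: x\in[0,1)^j\}$ (for $j=0$, $\Pi$ of the empty matrix is $\{0\}$). $B\setminus B_\ell$ denotes the $d\times(j-1)$ matrix obtained by deleting column $B_\ell$. For every $b\in\mathbb{Z}^d$ in the real span of the columns of $B$ there is a unique $x\in\mathbb{Q}^j$ with $Bx=b$. The fractionality $\mathrm{frac}_B[i]$ of index $i$ is the maximum, over all such $b\in\mathbb{Z}^d\cap\operatorname{span}(B)$, of the denominator $z_i\ge1$ of $x_i$ written in lowest terms $x_i=y_i/z_i$ with $\gcd(y_i,z_i)=1$. *)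

theory Defs
  imports "HOL-Analysis.Analysis"
begin

text \<open>A matrix B in Z^(d x j) is represented by the list of its columns
  (each an integer vector indexed by the finite type 'd); j = length of the list.\<close>

definition rvec :: "int ^ 'd \<Rightarrow> real ^ 'd" where
  "rvec v = (\<chi> k. real_of_int (v $ k))"

definition lincomb :: "(int ^ 'd) list \<Rightarrow> (nat \<Rightarrow> real) \<Rightarrow> real ^ 'd" where
  "lincomb B x = (\<Sum>i<length B. x i *\<^sub>R rvec (B ! i))"

definition lin_indep_cols :: "(int ^ 'd) list \<Rightarrow> bool" where
  "lin_indep_cols B \<longleftrightarrow>
     (\<forall>x. lincomb B x = 0 \<longrightarrow> (\<forall>i<length B. x i = 0))"

definition fund_par :: "(int ^ 'd) list \<Rightarrow> (real ^ 'd) set" where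
  "fund_par B = {lincomb B x | x. \<forall>i<length B. 0 \<le> x i \<and> x i < 1}"

definition lattice_pts :: "(int ^ 'd) list \<Rightarrow> nat" where
  "lattice_pts B = card {v :: int ^ 'd. rvec v \<in> fund_par B}"

text \<open>B with column l deleted (0-based index l).\<close>
definition del_col :: "(int ^ 'd) list \<Rightarrow> nat \<Rightarrow> (int ^ 'd) list" where
  "del_col B l = take l B @ drop (Suc l) B"

text \<open>Fractionality of (0-based) index i: maximum denominator (in lowest terms) of
  the i-th coordinate of the rational coefficient vector x with Bx = b, over
  integer vectors b in the span of B.\<close>
definition frac :: "(int ^ 'd) list \<Rightarrow> nat \<Rightarrow> nat" where
  "frac B i = Max {nat (snd (quotient_of (x i))) | x b.
      lincomb B (\<lambda>k. of_rat (x k)) = rvec (b :: int ^ 'd)}"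

end

theory Submission imports Defs begin

lemma lincomb_comp: "lincomb B x $ k = (\<Sum>i<length B. x i * real_of_int (B!i $ k))"
  by (simp add: lincomb_def rvec_def)

lemma lincomb_cong: "(\<And>i. i < length B \<Longrightarrow> x i = y i) \<Longrightarrow> lincomb B x = lincomb B y"
  unfolding lincomb_def by (rule sum.cong) auto

lemma lincomb_add: "lincomb B (\<lambda>i. x i + y i) = lincomb B x + lincomb B y"
  unfolding lincomb_def by (simp add: scaleR_add_left sum.distrib)

lemma lincomb_diff: "lincomb B (\<lambda>i. x i - y i) = lincomb B x - lincomb B y"
  unfolding lincomb_def by (simp add: scaleR_diff_left sum_subtractf)

lemma rvec_add: "rvec (u + v) = rvec u + rvec v"
  by (simp add: rvec_def vec_eq_iff)

lemma rvec_diff: "rvec (u - v) = rvec u - rvec v"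
  by (simp add: rvec_def vec_eq_iff)

lemma rvec_inj: "rvec u = rvec v \<Longrightarrow> u = v"
  by (simp add: rvec_def vec_eq_iff)

definition lat :: "(int ^ 'd) list \<Rightarrow> (nat \<Rightarrow> int) \<Rightarrow> int ^ 'd" where
  "lat B h = (\<Sum>i<length B. h i *s B ! i)"

lemma rvec_lat: "rvec (lat B h) = lincomb B (\<lambda>i. real_of_int (h i))"
  by (simp add: lat_def lincomb_def rvec_def vec_eq_iff)

lemma lat_add: "lat B h + lat B g = lat B (\<lambda>i. h i + g i)"
  unfolding lat_def by (simp add: sum.distrib vec_eq_iff algebra_simps)

lemma lat_diff: "lat B h - lat B g = lat B (\<lambda>i. h i - g i)"
  unfolding lat_def by (simp add: sum_subtractf vec_eq_iff algebra_simps)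

lemma lin_indep_unique:
  assumes "lin_indep_cols B" "lincomb B x = lincomb B y" "i < length B"
  shows "x i = y i"
proof -
  have "lincomb B (\<lambda>i. x i - y i) = 0" using assms(2) by (simp add: lincomb_diff)
  then show ?thesis using assms(1,3) unfolding lin_indep_cols_def by auto
qed


definition qs :: "rat \<Rightarrow> real \<Rightarrow> real" where "qs q r = of_rat q * r"

lemma qs_vs: "vector_space qs"
  by unfold_locales (simp_all add: qs_def algebra_simps of_rat_add of_rat_mult)

lemma coef_rat:
  assumes li: "lin_indep_cols B" and eq: "lincomb B x = rvec b" and i: "i < length B"
  shows "x i \<in> \<rat>"
proof (rule ccontr)
  assume nr: "x i \<notin> \<rat>"
  interpret Q: vector_space qs by (rule qs_vs)
  interpret QP: vector_space_pair qs qs by unfold_locales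
  have sp1: "Q.span {1} \<subseteq> \<rat>"
    by (auto simp: Q.span_singleton qs_def)
  have i1: "Q.independent {1::real}"
    by (rule Q.independent_insertI) (auto simp: Q.independent_empty)
  have ind: "Q.independent {x i, 1}"
    by (rule Q.independent_insertI) (use sp1 nr i1 in auto)
  have "x i \<noteq> 1" using nr by auto
  obtain g where lg: "Vector_Spaces.linear qs qs g" and gv: "\<forall>y\<in>{x i, 1}. g y = (if y = 1 then 1 else 0)"
    using QP.linear_independent_extend[OF ind, of "\<lambda>y. if y = 1 then 1 else 0"] by blast
  interpret G: Vector_Spaces.linear qs qs g by (rule lg)
  have g1: "g 1 = 1" and gx: "g (x i) = 0" using gv \<open>x i \<noteq> 1\<close> by auto
  have gq: "g (of_rat q) = of_rat q" for q
  proof -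
    have "g (of_rat q) = g (qs q 1)" by (simp add: qs_def)
    also have "\<dots> = qs q (g 1)" by (rule G.scale)
    finally show ?thesis by (simp add: g1 qs_def)
  qed
  have gm: "g (y * real_of_int c) = real_of_int c * g y" for y c
  proof -
    have "g (y * real_of_int c) = g (qs (of_int c) y)" by (simp add: qs_def mult.commute)
    also have "\<dots> = qs (of_int c) (g y)" by (rule G.scale)
    finally show ?thesis by (simp add: qs_def)
  qed
  have "lincomb B (\<lambda>j. g (x j)) = rvec b"
  proof (subst vec_eq_iff, intro allI)
    fix k
    have "lincomb B (\<lambda>j. g (x j)) $ k = (\<Sum>j<length B. g (x j * real_of_int (B!j $ k)))"
      by (simp add: lincomb_comp gm mult.commute)
    also have "\<dots> = g (\<Sum>j<length B. x j * real_of_int (B!j $ k))"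
      by (rule G.sum[symmetric])
    also have "\<dots> = g (rvec b $ k)" using eq by (simp add: lincomb_comp[symmetric])
    also have "\<dots> = rvec b $ k"
      using gq[of "of_int (b $ k)"] by (simp add: rvec_def)
    finally show "lincomb B (\<lambda>j. g (x j)) $ k = rvec b $ k" .
  qed
  then have "g (x i) = x i" using lin_indep_unique[OF li _ i] eq by metis
  then have "x i = 0" using gx by simp
  then show False using nr by simp
qed


lemma del_col_length: "l < length B \<Longrightarrow> length (del_col B l) = length B - 1"
  by (simp add: del_col_def)

lemma del_col_nth: "l < length B \<Longrightarrow> i < length B - 1 \<Longrightarrow>
    del_col B l ! i = B ! (if i < l then i else Suc i)"
  by (auto simp: del_col_def nth_append min_def)

lemma lincomb_del:
  assumes lB: "l < length B"
  shows "lincomb (del_col B l) y =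
     lincomb B (\<lambda>i. if i < l then y i else if i = l then 0 else y (i - 1))"
    (is "_ = lincomb B ?x")
proof -
  let ?n = "length B"
  define \<sigma> where "\<sigma> i = (if i < l then i else Suc i)" for i
  have inj: "inj_on \<sigma> {..<?n - 1}" by (auto simp: inj_on_def \<sigma>_def split: if_splits)
  have img: "\<sigma> ` {..<?n - 1} = {..<?n} - {l}"
  proof
    show "\<sigma> ` {..<?n - 1} \<subseteq> {..<?n} - {l}" using lB by (auto simp: \<sigma>_def)
    show "{..<?n} - {l} \<subseteq> \<sigma> ` {..<?n - 1}"
    proof
      fix j assume j: "j \<in> {..<?n} - {l}"
      show "j \<in> \<sigma> ` {..<?n - 1}"
      proof (cases "j < l")
        case True then show ?thesis using j lB by (force simp: \<sigma>_def)
      next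
        case False
        then have "j = \<sigma> (j - 1)" "j - 1 < ?n - 1" using j by (auto simp: \<sigma>_def)
        then show ?thesis by blast
      qed
    qed
  qed
  have "lincomb (del_col B l) y = (\<Sum>i<?n - 1. y i *\<^sub>R rvec (B ! \<sigma> i))"
    unfolding lincomb_def del_col_length[OF lB]
    by (rule sum.cong) (auto simp: del_col_nth[OF lB] \<sigma>_def)
  also have "\<dots> = (\<Sum>i<?n - 1. ?x (\<sigma> i) *\<^sub>R rvec (B ! \<sigma> i))"
    by (rule sum.cong) (auto simp: \<sigma>_def)
  also have "\<dots> = (\<Sum>j\<in>{..<?n} - {l}. ?x j *\<^sub>R rvec (B ! j))"
    using sum.reindex[OF inj, of "\<lambda>j. ?x j *\<^sub>R rvec (B ! j)"] img by simp
  also have "\<dots> = (\<Sum>j<?n. ?x j *\<^sub>R rvec (B ! j))"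
    using lB by (subst sum.remove[of _ l]) auto
  finally show ?thesis by (simp add: lincomb_def)
qed

lemma fund_par_del:
  assumes lB: "l < length B"
  shows "fund_par (del_col B l) =
     {lincomb B x | x. x l = 0 \<and> (\<forall>i<length B. i \<noteq> l \<longrightarrow> 0 \<le> x i \<and> x i < 1)}"
proof
  show "fund_par (del_col B l) \<subseteq> {lincomb B x | x. x l = 0 \<and> (\<forall>i<length B. i \<noteq> l \<longrightarrow> 0 \<le> x i \<and> x i < 1)}"
  proof
    fix v assume "v \<in> fund_par (del_col B l)"
    then obtain y where y: "v = lincomb (del_col B l) y" "\<forall>i<length B - 1. 0 \<le> y i \<and> y i < 1"
      by (auto simp: fund_par_def del_col_length[OF lB])
    let ?x = "\<lambda>i. if i < l then y i else if i = l then 0 else y (i - 1)"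
    have "v = lincomb B ?x" using y(1) lincomb_del[OF lB] by simp
    moreover have "?x l = 0 \<and> (\<forall>i<length B. i \<noteq> l \<longrightarrow> 0 \<le> ?x i \<and> ?x i < 1)"
      using y(2) lB by auto
    ultimately show "v \<in> {lincomb B x | x. x l = 0 \<and> (\<forall>i<length B. i \<noteq> l \<longrightarrow> 0 \<le> x i \<and> x i < 1)}"
      by blast
  qed
next
  show "{lincomb B x | x. x l = 0 \<and> (\<forall>i<length B. i \<noteq> l \<longrightarrow> 0 \<le> x i \<and> x i < 1)} \<subseteq> fund_par (del_col B l)"
  proof
    fix v assume "v \<in> {lincomb B x | x. x l = 0 \<and> (\<forall>i<length B. i \<noteq> l \<longrightarrow> 0 \<le> x i \<and> x i < 1)}"
    then obtain x where x: "v = lincomb B x" "x l = 0" "\<forall>i<length B. i \<noteq> l \<longrightarrow> 0 \<le> x i \<and> x i < 1"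
      by blast
    define y where "y i = x (if i < l then i else Suc i)" for i
    have "lincomb (del_col B l) y = lincomb B x"
      unfolding lincomb_del[OF lB] by (rule lincomb_cong) (auto simp: y_def x(2))
    moreover have "\<forall>i<length (del_col B l). 0 \<le> y i \<and> y i < 1"
      using x(3) by (auto simp: y_def del_col_length[OF lB])
    ultimately show "v \<in> fund_par (del_col B l)" unfolding fund_par_def x(1) by (intro CollectI exI[of _ y]) simp
  qed
qed


lemma quot_eq: "0 < d \<Longrightarrow> coprime p d \<Longrightarrow> quotient_of (of_int p / of_int d) = (p, d)"
  by (simp add: Fract_of_int_quotient[symmetric] quotient_of_Fract)

lemma quot_val: "quotient_of q = (p, d) \<Longrightarrow> q = of_int p / of_int d"
  by (rule quotient_of_div)

lemma inv_denom_in: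
  assumes one: "1 \<in> G" and cl: "\<And>a c g h. g \<in> G \<Longrightarrow> h \<in> G \<Longrightarrow> of_int a * g + of_int c * h \<in> G"
    and q: "q \<in> G" and qd: "quotient_of q = (p, d)"
  shows "1 / of_int d \<in> (G :: rat set)"
proof -
  have dpos: "d > 0" using quotient_of_denom_pos[OF qd] .
  have cp: "coprime p d" using quotient_of_coprime[OF qd] .
  obtain u v where uv: "u * p + v * d = gcd p d" using bezout_int by blast
  have "gcd p d = 1" using cp by simp
  have "of_int u * q + of_int v * 1 = (of_int (u * p + v * d)) / (of_int d :: rat)"
    using dpos by (simp add: quot_val[OF qd] field_simps)
  also have "\<dots> = 1 / of_int d" using uv \<open>gcd p d = 1\<close> by simp
  finally show ?thesis using cl[OF q one, of u v] by simp
qed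

lemma numth:
  fixes G :: "rat set"
  assumes one: "1 \<in> G" and cl: "\<And>a c g h. g \<in> G \<Longrightarrow> h \<in> G \<Longrightarrow> of_int a * g + of_int c * h \<in> G"
    and fin: "finite {g \<in> G. 0 \<le> g \<and> g < 1}"
  shows "card {g \<in> G. 0 \<le> g \<and> g < 1} = Max ((\<lambda>q. nat (snd (quotient_of q))) ` G)"
proof -
  define T where "T = {g \<in> G. 0 \<le> g \<and> g < 1}"
  define D where "D = (\<lambda>q. nat (snd (quotient_of q))) ` G"
  have mult_in: "of_int k * (1 / of_int d) \<in> G" if "1 / of_int d \<in> G" for k d
    using cl[OF that one, of k 0] by simp
  have dle: "d \<le> card T" if "q \<in> G" "quotient_of q = (p, d)" for q p d
  proof -
    have dpos: "d > 0" using quotient_of_denom_pos[OF that(2)] .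
    have inv: "1 / of_int d \<in> G" by (rule inv_denom_in[OF one cl that])
    have sub: "(\<lambda>k. of_int k / of_int d) ` {0..<d} \<subseteq> T"
      using mult_in[OF inv] dpos by (auto simp: T_def)
    have inj: "inj_on (\<lambda>k. of_int k / (of_int d :: rat)) {0..<d}"
      using dpos by (auto simp: inj_on_def)
    have "card ((\<lambda>k. of_int k / (of_int d :: rat)) ` {0..<d}) \<le> card T"
      by (rule card_mono[OF _ sub]) (use fin in \<open>simp add: T_def\<close>)
    then show ?thesis using card_image[OF inj] dpos by simp
  qed
  have finD: "finite D"
  proof (rule finite_subset[of _ "{..card T}"])
    show "D \<subseteq> {..card T}"
    proof
      fix n assume "n \<in> D"
      then obtain q where q: "q \<in> G" "n = nat (snd (quotient_of q))" by (auto simp: D_def)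
      obtain p d where pd: "quotient_of q = (p, d)" by (cases "quotient_of q")
      show "n \<in> {..card T}" using dle[OF q(1) pd] q(2) pd by simp
    qed
  qed simp
  have "1 \<in> D" using one by (force simp: D_def)
  then have "D \<noteq> {}" by auto
  define m where "m = Max D"
  have "m \<in> D" using Max_in[OF finD \<open>D \<noteq> {}\<close>] by (simp add: m_def)
  then obtain q0 where q0: "q0 \<in> G" "m = nat (snd (quotient_of q0))" by (auto simp: D_def)
  obtain p0 d0 where pd0: "quotient_of q0 = (p0, d0)" by (cases "quotient_of q0")
  have d0pos: "d0 > 0" using quotient_of_denom_pos[OF pd0] .
  have md0: "int m = d0" using q0(2) pd0 d0pos by simp
  have invm: "1 / of_int d0 \<in> G" by (rule inv_denom_in[OF one cl q0(1) pd0])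
  have maxD: "nat d \<le> m" if "q \<in> G" "quotient_of q = (p, d)" for q p d
  proof -
    have "nat d \<in> D" using that by (force simp: D_def)
    then show ?thesis using Max_ge[OF finD] by (simp add: m_def)
  qed
  have "T = (\<lambda>k. of_int k / of_int d0) ` {0..<d0}"
  proof
    show "(\<lambda>k. of_int k / of_int d0) ` {0..<d0} \<subseteq> T"
      using mult_in[OF invm] d0pos by (auto simp: T_def)
  next
    show "T \<subseteq> (\<lambda>k. of_int k / of_int d0) ` {0..<d0}"
    proof
      fix t assume t: "t \<in> T"
      obtain p d where pd: "quotient_of t = (p, d)" by (cases "quotient_of t")
      have dpos: "d > 0" using quotient_of_denom_pos[OF pd] .
      have tG: "t \<in> G" using t unfolding T_def by blast
      have invd: "1 / of_int d \<in> G" by (rule inv_denom_in[OF one cl tG pd])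
      define L where "L = lcm d d0"
      have Lpos: "L > 0" using dpos d0pos by (simp add: L_def lcm_pos_int)
      obtain u v where uv: "u * d + v * d0 = gcd d d0" using bezout_int by blast
      have gL: "gcd d d0 * L = d * d0" using dpos d0pos
        by (simp add: L_def abs_mult prod_gcd_lcm_int[symmetric])
      have "of_int u * (1 / of_int d0) + of_int v * (1 / of_int d) = (of_int (u * d + v * d0)) / (of_int (d * d0) :: rat)"
        using dpos d0pos by (simp add: field_simps)
      also have "\<dots> = 1 / of_int L"
        using uv gL Lpos dpos d0pos
        by (simp add: field_simps) (metis mult.commute of_int_mult)
      finally have invL: "1 / of_int L \<in> G" using cl[OF invm invd, of u v] by simp
      have "quotient_of (1 / of_int L) = (1, L)" using quot_eq[of L 1] Lpos by simp
      then have "nat L \<le> m" by (rule maxD[OF invL])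
      moreover have "d0 dvd L" by (simp add: L_def)
      ultimately have "L = d0" using md0 Lpos d0pos zdvd_imp_le by fastforce
      then have "d dvd d0" by (metis L_def dvd_lcm1)
      then obtain e where e: "d0 = d * e" by blast
      have epos: "e > 0" using e dpos d0pos by (simp add: zero_less_mult_iff)
      have tv: "t = of_int (p * e) / of_int d0"
        using quot_val[OF pd] e epos dpos by (simp add: field_simps)
      have "0 \<le> t" "t < 1" using t by (auto simp: T_def)
      then have "(0::rat) \<le> of_int (p * e)" "of_int (p * e) < (of_int d0 :: rat)" using tv d0pos by (simp_all add: field_simps)
      then have "0 \<le> p * e" "p * e < d0" by linarith+
      then show "t \<in> (\<lambda>k. of_int k / of_int d0) ` {0..<d0}" unfolding tv by (intro imageI) simp
    qed
  qed
  moreover have "inj_on (\<lambda>k. of_int k / (of_int d0 :: rat)) {0..<d0}"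
    using d0pos by (auto simp: inj_on_def)
  ultimately have "card T = nat d0" by (simp add: card_image)
  then have "card T = m" using md0 by simp
  then show ?thesis unfolding m_def D_def T_def .
qed


lemma lincomb_scale: "lincomb B (\<lambda>i. c * x i) = c *\<^sub>R lincomb B x"
  unfolding lincomb_def by (simp add: scaleR_sum_right)

lemma rvec_smult: "rvec (a *s b) = real_of_int a *\<^sub>R rvec b"
  by (simp add: rvec_def vec_eq_iff)

lemma lat_zero: "(\<And>i. i < length B \<Longrightarrow> h i = 0) \<Longrightarrow> lat B h = 0"
  unfolding lat_def by (rule sum.neutral) auto

locale LL =
  fixes B :: "(int ^ 'd) list" and l :: nat
  assumes li: "lin_indep_cols B" and lB: "l < length B"
begin

definition inL where "inL v \<longleftrightarrow> (\<exists>x. lincomb B x = rvec v)"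
definition cf where "cf v = (SOME x. lincomb B x = rvec v)"
definition PP where "PP = {v. rvec v \<in> fund_par B}"
definition PP' where "PP' = {v. rvec v \<in> fund_par (del_col B l)}"

lemma cf_spec: "inL v \<Longrightarrow> lincomb B (cf v) = rvec v"
  unfolding inL_def cf_def by (rule someI_ex[where P="\<lambda>x. lincomb B x = rvec v"])

lemma cf_eq: "lincomb B x = rvec v \<Longrightarrow> i < length B \<Longrightarrow> cf v i = x i"
  using cf_spec[of v] lin_indep_unique[OF li, of "cf v" x i] by (auto simp: inL_def)

lemma PP_iff: "v \<in> PP \<longleftrightarrow> inL v \<and> (\<forall>i<length B. 0 \<le> cf v i \<and> cf v i < 1)"
proof
  assume "v \<in> PP"
  then obtain x where x: "rvec v = lincomb B x" "\<forall>i<length B. 0 \<le> x i \<and> x i < 1"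
    by (auto simp: PP_def fund_par_def)
  then show "inL v \<and> (\<forall>i<length B. 0 \<le> cf v i \<and> cf v i < 1)"
    using cf_eq[OF x(1)[symmetric]] by (auto simp: inL_def)
next
  assume a: "inL v \<and> (\<forall>i<length B. 0 \<le> cf v i \<and> cf v i < 1)"
  then show "v \<in> PP" using cf_spec[of v] unfolding PP_def fund_par_def
    by (intro CollectI exI[of _ "cf v"]) auto
qed

lemma PP'_iff: "v \<in> PP' \<longleftrightarrow> inL v \<and> cf v l = 0 \<and> (\<forall>i<length B. 0 \<le> cf v i \<and> cf v i < 1)"
proof
  assume "v \<in> PP'"
  then obtain x where x: "rvec v = lincomb B x" "x l = 0" "\<forall>i<length B. i \<noteq> l \<longrightarrow> 0 \<le> x i \<and> x i < 1"
    by (auto simp: PP'_def fund_par_del[OF lB])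
  then show "inL v \<and> cf v l = 0 \<and> (\<forall>i<length B. 0 \<le> cf v i \<and> cf v i < 1)"
    using cf_eq[OF x(1)[symmetric]] lB by (auto simp: inL_def)
next
  assume a: "inL v \<and> cf v l = 0 \<and> (\<forall>i<length B. 0 \<le> cf v i \<and> cf v i < 1)"
  then show "v \<in> PP'" using cf_spec[of v] unfolding PP'_def fund_par_del[OF lB]
    by (intro CollectI exI[of _ "cf v"]) auto
qed

lemma PP'_sub: "PP' \<subseteq> PP"
  using PP'_iff PP_iff by auto

lemma shift:
  assumes "inL v"
  shows "inL (v - lat B h) \<and> (\<forall>i<length B. cf (v - lat B h) i = cf v i - of_int (h i))"
proof -
  have e: "lincomb B (\<lambda>i. cf v i - of_int (h i)) = rvec (v - lat B h)"
    by (simp add: lincomb_diff rvec_diff rvec_lat cf_spec[OF assms])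
  then show ?thesis using cf_eq[OF e] by (auto simp: inL_def)
qed

lemma addL:
  assumes "inL u" "inL v"
  shows "inL (u + v) \<and> (\<forall>i<length B. cf (u + v) i = cf u i + cf v i)"
proof -
  have e: "lincomb B (\<lambda>i. cf u i + cf v i) = rvec (u + v)"
    by (simp add: lincomb_add rvec_add cf_spec[OF assms(1)] cf_spec[OF assms(2)])
  then show ?thesis using cf_eq[OF e] by (auto simp: inL_def)
qed

lemma diffL:
  assumes "inL u" "inL v"
  shows "inL (u - v) \<and> (\<forall>i<length B. cf (u - v) i = cf u i - cf v i)"
proof -
  have e: "lincomb B (\<lambda>i. cf u i - cf v i) = rvec (u - v)"
    by (simp add: lincomb_diff rvec_diff cf_spec[OF assms(1)] cf_spec[OF assms(2)])
  then show ?thesis using cf_eq[OF e] by (auto simp: inL_def)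
qed

lemma P_unique:
  assumes v1: "v1 \<in> PP" and v2: "v2 \<in> PP" and e: "v1 = v2 + lat B h"
  shows "v1 = v2"
proof -
  have L2: "inL v2" using v2 PP_iff by auto
  have "v2 = v1 - lat B h" using e by simp
  then have c: "\<forall>i<length B. cf v2 i = cf v1 i - of_int (h i)"
    using shift[of v1 h] v1 PP_iff by auto
  have "h i = 0" if i: "i < length B" for i
  proof -
    have "0 \<le> cf v1 i" "cf v1 i < 1" "0 \<le> cf v2 i" "cf v2 i < 1"
      using v1 v2 i PP_iff by auto
    then have "-1 < real_of_int (h i)" "real_of_int (h i) < 1" using c i by auto
    then show ?thesis by linarith
  qed
  then have "lat B h = 0" by (rule lat_zero)
  then show ?thesis using e by simp
qed

definition red where "red v = v - lat B (\<lambda>i. \<lfloor>cf v i\<rfloor>)"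
definition red2 where "red2 v = v - lat B (\<lambda>i. if i = l then 0 else \<lfloor>cf v i\<rfloor>)"

lemma red_in:
  assumes "inL v"
  shows "red v \<in> PP \<and> (\<forall>i<length B. cf (red v) i = cf v i - of_int \<lfloor>cf v i\<rfloor>)"
proof -
  have s: "inL (red v)" "\<forall>i<length B. cf (red v) i = cf v i - of_int \<lfloor>cf v i\<rfloor>"
    using shift[OF assms, of "\<lambda>i. \<lfloor>cf v i\<rfloor>"] by (auto simp: red_def)
  then have "\<forall>i<length B. 0 \<le> cf (red v) i \<and> cf (red v) i < 1"
    by (auto simp: floor_less_cancel)
  then show ?thesis using s PP_iff by auto
qed

lemma red2_in:
  assumes "inL v" "cf v l = 0"
  shows "red2 v \<in> PP'"
proof -
  have s: "inL (red2 v)" "\<forall>i<length B. cf (red2 v) i = cf v i - of_int (if i = l then 0 else \<lfloor>cf v i\<rfloor>)"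
    using shift[OF assms(1), of "\<lambda>i. if i = l then 0 else \<lfloor>cf v i\<rfloor>"] by (auto simp: red2_def)
  then have "\<forall>i<length B. 0 \<le> cf (red2 v) i \<and> cf (red2 v) i < 1"
    using assms(2) by (auto simp: floor_less_cancel)
  moreover have "cf (red2 v) l = 0" using s lB assms(2) by auto
  ultimately show ?thesis using s PP'_iff by auto
qed


lemma finite_PP: "finite PP"
proof -
  define M where "M = (\<Sum>k\<in>UNIV. \<Sum>i<length B. \<bar>B ! i $ k\<bar>)"
  have bnd: "\<bar>v $ k\<bar> \<le> M" if v: "v \<in> PP" for v k
  proof -
    have L: "inL v" and c: "\<forall>i<length B. 0 \<le> cf v i \<and> cf v i < 1" using v PP_iff by auto
    have "real_of_int (v $ k) = (\<Sum>i<length B. cf v i * real_of_int (B ! i $ k))"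
      using cf_spec[OF L] lincomb_comp[of B "cf v" k] by (simp add: rvec_def)
    then have "\<bar>real_of_int (v $ k)\<bar> \<le> (\<Sum>i<length B. \<bar>cf v i * real_of_int (B ! i $ k)\<bar>)"
      by (metis sum_abs)
    also have "\<dots> \<le> (\<Sum>i<length B. real_of_int \<bar>B ! i $ k\<bar>)"
    proof (rule sum_mono)
      fix i assume "i \<in> {..<length B}"
      then have "0 \<le> cf v i" "cf v i \<le> 1" using c by auto
      then show "\<bar>cf v i * real_of_int (B ! i $ k)\<bar> \<le> real_of_int \<bar>B ! i $ k\<bar>"
        by (simp add: abs_mult mult_left_le_one_le)
    qed
    finally have "real_of_int \<bar>v $ k\<bar> \<le> real_of_int (\<Sum>i<length B. \<bar>B ! i $ k\<bar>)" by simp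
    then have "\<bar>v $ k\<bar> \<le> (\<Sum>i<length B. \<bar>B ! i $ k\<bar>)" by (simp only: of_int_le_iff)
    also have "\<dots> \<le> M" unfolding M_def
      by (rule member_le_sum) (auto intro: sum_nonneg)
    finally show ?thesis .
  qed
  have "PP \<subseteq> vec_lambda ` (PiE UNIV (\<lambda>_. {-M..M}))"
  proof
    fix v assume "v \<in> PP"
    then have "vec_nth v \<in> PiE UNIV (\<lambda>_. {-M..M})" using bnd[of v] by (force simp: abs_le_iff)
    then show "v \<in> vec_lambda ` (PiE UNIV (\<lambda>_. {-M..M}))" by (metis image_eqI vec_nth_inverse)
  qed
  moreover have "finite (vec_lambda ` (PiE UNIV (\<lambda>_. {-M..M})) :: (int ^ 'd) set)"
    by (intro finite_imageI finite_PiE) auto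
  ultimately show ?thesis by (rule finite_subset)
qed

definition TT where "TT = (\<lambda>v. cf v l) ` PP"
definition fib where "fib t = {v \<in> PP. cf v l = t}"

lemma card_fib:
  assumes t: "t \<in> TT"
  shows "card (fib t) = card PP'"
proof -
  obtain w where w: "w \<in> PP" "cf w l = t" using t by (auto simp: TT_def)
  have Lw: "inL w" using w PP_iff by auto
  have t01: "0 \<le> t" "t < 1" using w PP_iff lB by auto
  define \<alpha> where "\<alpha> v = red2 (v - w)" for v
  have inj: "inj_on \<alpha> (fib t)"
  proof (rule inj_onI)
    fix v1 v2 assume v1: "v1 \<in> fib t" and v2: "v2 \<in> fib t" and e: "\<alpha> v1 = \<alpha> v2"
    have ee: "v1 = v2 + lat B (\<lambda>i. (if i = l then 0 else \<lfloor>cf (v1 - w) i\<rfloor>) - (if i = l then 0 else \<lfloor>cf (v2 - w) i\<rfloor>))"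
      using e unfolding \<alpha>_def red2_def lat_diff[symmetric] by (simp add: algebra_simps)
    show "v1 = v2" by (rule P_unique[OF _ _ ee]) (use v1 v2 in \<open>auto simp: fib_def\<close>)
  qed
  have sub1: "\<alpha> ` fib t \<subseteq> PP'"
  proof
    fix u assume "u \<in> \<alpha> ` fib t"
    then obtain v where v: "v \<in> fib t" "u = \<alpha> v" by auto
    have Lv: "inL v" and cv: "cf v l = t" using v(1) PP_iff by (auto simp: fib_def)
    have "inL (v - w)" "cf (v - w) l = 0" using diffL[OF Lv Lw] lB cv w(2) by auto
    then show "u \<in> PP'" using red2_in v(2) by (simp add: \<alpha>_def)
  qed
  have img: "\<alpha> ` fib t = PP'"
  proof
    show "\<alpha> ` fib t \<subseteq> PP'" by (rule sub1)
  next
    show "PP' \<subseteq> \<alpha> ` fib t"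
    proof
      fix u assume u: "u \<in> PP'"
      have Lu: "inL u" and cu: "cf u l = 0" using u PP'_iff by auto
      have Luw: "inL (u + w)" and cuw: "cf (u + w) l = t" using addL[OF Lu Lw] lB cu w(2) by auto
      define v where "v = red (u + w)"
      have vP: "v \<in> PP" and cv: "cf v l = t"
        using red_in[OF Luw] lB cuw t01 by (auto simp: v_def floor_eq_iff)
      then have vf: "v \<in> fib t" by (simp add: fib_def)
      have "\<alpha> v \<in> PP'" using vf sub1 by blast
      then have aP: "\<alpha> v \<in> PP" using PP'_sub by auto
      have "u = \<alpha> v + lat B (\<lambda>i. \<lfloor>cf (u + w) i\<rfloor> + (if i = l then 0 else \<lfloor>cf (v - w) i\<rfloor>))"
        unfolding \<alpha>_def red2_def v_def red_def lat_add[symmetric] by (simp add: algebra_simps)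
      then have "u = \<alpha> v" by (rule P_unique[OF PP'_sub[THEN subsetD, OF u] aP])
      then show "u \<in> \<alpha> ` fib t" using vf by blast
    qed
  qed
  show ?thesis using card_image[OF inj] img by simp
qed

lemma card_PP: "card PP = card TT * card PP'"
proof -
  have "PP = (\<Union>t\<in>TT. fib t)" by (auto simp: TT_def fib_def)
  moreover have "card (\<Union>t\<in>TT. fib t) = (\<Sum>t\<in>TT. card (fib t))"
    by (rule card_UN_disjoint) (use finite_PP in \<open>auto simp: TT_def fib_def\<close>)
  ultimately have "card PP = (\<Sum>t\<in>TT. card (fib t))" by simp
  also have "\<dots> = (\<Sum>t\<in>TT. card PP')" by (rule sum.cong) (auto simp: card_fib)
  finally show ?thesis by simp
qed


definition GG where "GG = {q::rat. \<exists>x b. lincomb B x = rvec b \<and> x l = of_rat q}"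

lemma GG_one: "1 \<in> GG"
proof -
  have "lincomb B (\<lambda>i. if i = l then 1 else 0) = rvec (B ! l)"
  proof -
    have "(\<Sum>i<length B. (if i = l then 1 else 0) *\<^sub>R rvec (B ! i)) = (\<Sum>i<length B. if i = l then rvec (B ! i) else 0)"
      by (rule sum.cong) auto
    then show ?thesis unfolding lincomb_def using lB by simp
  qed
  then show ?thesis unfolding GG_def by (intro CollectI exI[of _ "\<lambda>i. if i = l then 1 else 0"] exI[of _ "B ! l"]) simp
qed

lemma GG_cl:
  assumes g: "g \<in> GG" and h: "h \<in> GG"
  shows "of_int a * g + of_int c * h \<in> GG"
proof -
  obtain x1 b1 where 1: "lincomb B x1 = rvec b1" "x1 l = of_rat g" using g by (auto simp: GG_def)
  obtain x2 b2 where 2: "lincomb B x2 = rvec b2" "x2 l = of_rat h" using h by (auto simp: GG_def)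
  have "lincomb B (\<lambda>i. of_int a * x1 i + of_int c * x2 i) = rvec (a *s b1 + c *s b2)"
    by (simp add: lincomb_add lincomb_scale rvec_add rvec_smult 1 2)
  moreover have "of_int a * x1 l + of_int c * x2 l = of_rat (of_int a * g + of_int c * h)"
    by (simp add: 1 2 of_rat_add of_rat_mult)
  ultimately show ?thesis unfolding GG_def by blast
qed

lemma TT_eq: "TT = of_rat ` {g \<in> GG. 0 \<le> g \<and> g < 1}"
proof
  show "TT \<subseteq> of_rat ` {g \<in> GG. 0 \<le> g \<and> g < 1}"
  proof
    fix t :: real assume "t \<in> TT"
    then obtain v where v: "v \<in> PP" "t = cf v l" by (auto simp: TT_def)
    have L: "inL v" and c: "0 \<le> cf v l" "cf v l < 1" using v(1) PP_iff lB by auto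
    have "cf v l \<in> \<rat>" by (rule coef_rat[OF li cf_spec[OF L] lB])
    then obtain q where q: "cf v l = of_rat q" by (auto elim: Rats_cases)
    have "q \<in> GG" unfolding GG_def using cf_spec[OF L] q by blast
    moreover have "0 \<le> q" "q < 1" using c q by (simp_all add: zero_le_of_rat_iff)
    ultimately show "t \<in> of_rat ` {g \<in> GG. 0 \<le> g \<and> g < 1}" using v(2) q by blast
  qed
next
  show "of_rat ` {g \<in> GG. 0 \<le> g \<and> g < 1} \<subseteq> TT"
  proof
    fix t :: real assume "t \<in> of_rat ` {g \<in> GG. 0 \<le> g \<and> g < 1}"
    then obtain q where q: "q \<in> GG" "0 \<le> q" "q < 1" "t = of_rat q" by auto
    obtain x b where xb: "lincomb B x = rvec b" "x l = of_rat q" using q(1) by (auto simp: GG_def)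
    have L: "inL b" using xb by (auto simp: inL_def)
    have cb: "cf b l = of_rat q" using cf_eq[OF xb(1) lB] xb(2) by simp
    have "0 \<le> (of_rat q :: real)" "(of_rat q :: real) < 1" using q by (simp_all add: zero_le_of_rat_iff)
    then have "red b \<in> PP" "cf (red b) l = t" using red_in[OF L] lB cb q(4) by (auto simp: floor_eq_iff)
    then show "t \<in> TT" unfolding TT_def by force
  qed
qed

lemma frac_eq: "frac B l = Max ((\<lambda>q. nat (snd (quotient_of q))) ` GG)"
proof -
  have "{nat (snd (quotient_of (x l))) | x b. lincomb B (\<lambda>k. of_rat (x k)) = rvec (b :: int ^ 'd)}
        = (\<lambda>q. nat (snd (quotient_of q))) ` GG"
  proof
    show "{nat (snd (quotient_of (x l))) | x b. lincomb B (\<lambda>k. of_rat (x k)) = rvec (b :: int ^ 'd)}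
        \<subseteq> (\<lambda>q. nat (snd (quotient_of q))) ` GG"
      unfolding GG_def by blast
  next
    show "(\<lambda>q. nat (snd (quotient_of q))) ` GG \<subseteq>
        {nat (snd (quotient_of (x l))) | x b. lincomb B (\<lambda>k. of_rat (x k)) = rvec (b :: int ^ 'd)}"
    proof
      fix n assume "n \<in> (\<lambda>q. nat (snd (quotient_of q))) ` GG"
      then obtain q where q: "q \<in> GG" "n = nat (snd (quotient_of q))" by auto
      obtain x b where xb: "lincomb B x = rvec b" "x l = of_rat q" using q(1) by (auto simp: GG_def)
      define xq where "xq i = (SOME r. x i = of_rat r)" for i
      have xq: "of_rat (xq i) = x i" if "i < length B" for i
      proof -
        have "x i \<in> \<rat>" by (rule coef_rat[OF li xb(1) that])
        then have "\<exists>r. x i = of_rat r" by (auto elim: Rats_cases)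
        then show ?thesis unfolding xq_def by (metis (mono_tags) someI_ex)
      qed
      have "lincomb B (\<lambda>k. of_rat (xq k)) = rvec b"
        using xb(1) lincomb_cong[of B "\<lambda>k. of_rat (xq k)" x] xq by simp
      moreover have "xq l = q" using xq[OF lB] xb(2) by simp
      ultimately show "n \<in> {nat (snd (quotient_of (x l))) | x b. lincomb B (\<lambda>k. of_rat (x k)) = rvec (b :: int ^ 'd)}"
        using q(2) by blast
    qed
  qed
  then show ?thesis unfolding frac_def by simp
qed

lemma card_TT: "card TT = frac B l"
proof -
  have inj: "inj_on (of_rat :: rat \<Rightarrow> real) {g \<in> GG. 0 \<le> g \<and> g < 1}"
    by (auto simp: inj_on_def)
  have finT: "finite TT" using finite_PP by (simp add: TT_def)
  have fin: "finite {g \<in> GG. 0 \<le> g \<and> g < 1}"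
    using finite_imageD[of of_rat "{g \<in> GG. 0 \<le> g \<and> g < 1}"] inj finT TT_eq by simp
  have "card TT = card {g \<in> GG. 0 \<le> g \<and> g < 1}" using TT_eq card_image[OF inj] by simp
  also have "\<dots> = Max ((\<lambda>q. nat (snd (quotient_of q))) ` GG)"
    by (rule numth[OF GG_one GG_cl fin])
  finally show ?thesis using frac_eq by simp
qed

end

theorem mainTheorem3:
  fixes B :: "(int ^ 'd) list" and l :: nat
  assumes "length B \<le> CARD('d)"
    and "lin_indep_cols B"
    and "l < length B"
  shows "lattice_pts B = frac B l * lattice_pts (del_col B l)"
proof -
  interpret LL B l using assms(2,3) by unfold_locales
  show ?thesis using card_PP card_TT by (simp add: lattice_pts_def PP_def PP'_def)
qed

end
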